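(* Let $p_k$ be as defined in the context. In the Laurent polynomial ring $\mathbb Z[a^{\pm1},q^{\pm1}]$, for each nonzero integer $i$ set $\ell=|i|-1$ and $k=|i-\tfrac12|-\tfrac12$ (so $k=\ell=i-1$ if $i\ge1$, and $k=-i$, $\ell=-i-1$ if $i\le-1$), and define for $m\in\mathbb Z$ $$x_i(m)=\begin{cases}p_{m-k}\big(a^{-1}q^{-m-k},a^{-1}q^{-m-k+1},\dots,a^{-1}q^{-m+\ell}\big)&\text{if } m>k,\\ 0&\text{if } -\ell\le m\le k,\\ p_{-m-\ell}\big(aq^{m-\ell},aq^{m-\ell+1},\dots,aq^{m+k}\big)&\text{if } m<-\ell.\end{cases}$$ Then for all integers $m\ne n$, $1-aq^{m+n}$ divides $x_i(m)-x_i(n)$ in $\mathbb Z[a^{\pm1},q^{\pm1}]$.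
   Context: For integers $k\ge0$ and variables $\lambda_1,\dots,\lambda_r$, $p_k(\lambda_1,\dots,\lambda_r)=(1-\lambda_1)\cdots(1-\lambda_r)\sum_{\alpha\in\mathbb Z_{\ge0}^r,\,0\le|\alpha|<k}\lambda^\alpha$, with $\lambda^\alpha=\prod\lambda_j^{\alpha_j}$ and $|\alpha|=\sum\alpha_j$. (In the paper these are the fixed-point restrictions of module generators of $K^*_T(\Omega SU(2))$, with $K^0_T=\mathbb Z[a^{\pm1},q^{\pm1}]$ and the fixed points indexed by $\mathbb Z$; the stated divisibility is the GKM condition along the edge between fixed points $m$ and $n$.) *)

theory Defs
  imports "HOL-Library.Poly_Mapping" "HOL-Library.Product_Plus"
begin

text \<open>The Laurent polynomial ring Z[a^{+-1}, q^{+-1}] realised as the group ring of Z x Z: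
  finitely supported functions (int x int) to int with convolution product.
  The basis element at (e, f) is the Laurent monomial a^e q^f.\<close>
type_synonym laurent2 = "(int \<times> int) \<Rightarrow>\<^sub>0 int"

definition lmono :: "int \<Rightarrow> int \<Rightarrow> laurent2" where
  "lmono e f = Poly_Mapping.single (e, f) 1"

definition pk :: "nat \<Rightarrow> 'a::comm_ring_1 list \<Rightarrow> 'a" where
  "pk k lams = (\<Prod>l\<leftarrow>lams. 1 - l) *
     (\<Sum>\<alpha>\<in>{\<alpha>::nat list. length \<alpha> = length lams \<and> sum_list \<alpha> < k}.
        \<Prod>j<length lams. (lams ! j) ^ (\<alpha> ! j))"

definition ell_of :: "int \<Rightarrow> int" where
  "ell_of i = \<bar>i\<bar> - 1"

text \<open>k = |i - 1/2| - 1/2, i.e. i - 1 for i >= 1 and -i for i <= -1.\<close>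
definition k_of :: "int \<Rightarrow> int" where
  "k_of i = (if i \<ge> 1 then i - 1 else - i)"

definition xgen :: "int \<Rightarrow> int \<Rightarrow> laurent2" where
  "xgen i m = (let k = k_of i; l = ell_of i in
     if m > k then
       pk (nat (m - k)) (map (\<lambda>j. lmono (-1) (- m - k + int j)) [0..<nat (k + l + 1)])
     else if - l \<le> m then 0
     else
       pk (nat (- m - l)) (map (\<lambda>j. lmono 1 (m - l + int j)) [0..<nat (k + l + 1)]))"

end

theory Submission
  imports Defs
begin

definition AE :: "nat \<Rightarrow> nat \<Rightarrow> nat list set" where
  "AE n d = {\<alpha>. length \<alpha> = n \<and> sum_list \<alpha> = d}"

definition mon :: "'a::comm_ring_1 list \<Rightarrow> nat list \<Rightarrow> 'a" where
  "mon lams \<alpha> = (\<Prod>j<length lams. (lams ! j) ^ (\<alpha> ! j))"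

definition Hs :: "nat \<Rightarrow> 'a::comm_ring_1 list \<Rightarrow> 'a" where
  "Hs d lams = (\<Sum>\<alpha>\<in>AE (length lams) d. mon lams \<alpha>)"

lemma finite_AE: "finite (AE n d)"
proof -
  have "AE n d \<subseteq> {xs. set xs \<subseteq> {0..d} \<and> length xs = n}"
    unfolding AE_def using member_le_sum_list by fastforce
  moreover have "finite {xs. set xs \<subseteq> {0..d} \<and> length xs = n}"
    by (rule finite_lists_length_eq) simp
  ultimately show ?thesis by (rule finite_subset)
qed

lemma AS_eq: "{\<alpha>::nat list. length \<alpha> = n \<and> sum_list \<alpha> < Suc k} =
   {\<alpha>::nat list. length \<alpha> = n \<and> sum_list \<alpha> < k} \<union> AE n k"
  unfolding AE_def by auto

lemma pk_Hs: "pk k lams = (\<Prod>l\<leftarrow>lams. 1 - l) * (\<Sum>d<k. Hs d lams)"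
proof -
  have "(\<Sum>\<alpha>\<in>{\<alpha>::nat list. length \<alpha> = length lams \<and> sum_list \<alpha> < k}. mon lams \<alpha>) = (\<Sum>d<k. Hs d lams)"
  proof (induction k)
    case 0
    then show ?case by simp
  next
    case (Suc k)
    have fin: "finite {\<alpha>::nat list. length \<alpha> = length lams \<and> sum_list \<alpha> < k}"
      by (rule finite_subset[OF _ finite_lists_length_eq[of "{0..k}" "length lams"]])
         (use member_le_sum_list in fastforce)+
    have "(\<Sum>\<alpha>\<in>{\<alpha>::nat list. length \<alpha> = length lams \<and> sum_list \<alpha> < Suc k}. mon lams \<alpha>)
       = (\<Sum>\<alpha>\<in>{\<alpha>::nat list. length \<alpha> = length lams \<and> sum_list \<alpha> < k}. mon lams \<alpha>) + Hs k lams"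
      unfolding AS_eq Hs_def
      by (rule sum.union_disjoint[OF fin finite_AE]) (auto simp: AE_def)
    then show ?case using Suc by simp
  qed
  then show ?thesis unfolding pk_def mon_def by simp
qed

lemma AE_Suc: "AE (Suc n) d = (\<lambda>(a,\<beta>). a#\<beta>) ` (SIGMA a:{..d}. AE n (d-a))"
proof (rule set_eqI)
  fix x show "x \<in> AE (Suc n) d \<longleftrightarrow> x \<in> (\<lambda>(a,\<beta>). a#\<beta>) ` (SIGMA a:{..d}. AE n (d-a))"
    unfolding AE_def by (cases x) (auto simp: image_iff)
qed

lemma mon_Cons: "mon (x#xs) (a#\<beta>) = x ^ a * mon xs \<beta>"
  unfolding mon_def length_Cons prod.lessThan_Suc_shift by simp

lemma Hs_Nil: "Hs d [] = (if d = 0 then 1 else 0)"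
proof -
  have "AE 0 d = (if d = 0 then {[]} else {})" unfolding AE_def by auto
  then show ?thesis unfolding Hs_def mon_def by auto
qed

lemma Hs_Cons: "Hs d (x#xs) = (\<Sum>a\<le>d. x ^ a * Hs (d - a) xs)"
proof -
  have inj: "inj_on (\<lambda>(a,\<beta>). a#\<beta>) (SIGMA a:{..d}. AE (length xs) (d-a))"
    by (auto simp: inj_on_def)
  have "Hs d (x#xs) = (\<Sum>p\<in>(SIGMA a:{..d}. AE (length xs) (d-a)). mon (x#xs) ((\<lambda>(a,\<beta>). a#\<beta>) p))"
    unfolding Hs_def by (simp add: AE_Suc sum.reindex[OF inj])
  also have "\<dots> = (\<Sum>p\<in>(SIGMA a:{..d}. AE (length xs) (d-a)). (case p of (a,\<beta>) \<Rightarrow> x ^ a * mon xs \<beta>))"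
    by (rule sum.cong) (auto simp: mon_Cons)
  also have "\<dots> = (\<Sum>a\<le>d. \<Sum>\<beta>\<in>AE (length xs) (d-a). x ^ a * mon xs \<beta>)"
    by (rule sum.Sigma[symmetric]) (auto simp: finite_AE)
  also have "\<dots> = (\<Sum>a\<le>d. x ^ a * Hs (d - a) xs)"
    unfolding Hs_def by (simp add: sum_distrib_left)
  finally show ?thesis .
qed

lemma Hs_0: "Hs 0 xs = 1"
  by (induction xs) (simp_all add: Hs_Nil Hs_Cons)

lemma Hs_scale: "Hs d (map ((*) c) xs) = c ^ d * Hs d xs"
proof (induction xs arbitrary: d)
  case Nil
  then show ?case by (simp add: Hs_Nil)
next
  case (Cons x xs)
  have "Hs d (map ((*) c) (x#xs)) = (\<Sum>a\<le>d. (c*x) ^ a * (c ^ (d-a) * Hs (d - a) xs))"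
    by (simp add: Hs_Cons Cons)
  also have "\<dots> = (\<Sum>a\<le>d. c ^ d * (x ^ a * Hs (d - a) xs))"
  proof (rule sum.cong)
    fix a assume "a \<in> {..d}"
    then have "c ^ d = c ^ a * c ^ (d - a)" by (simp add: power_add[symmetric])
    then show "(c*x) ^ a * (c ^ (d-a) * Hs (d - a) xs) = c ^ d * (x ^ a * Hs (d - a) xs)"
      by (simp add: power_mult_distrib algebra_simps)
  qed simp
  finally show ?case by (simp add: Hs_Cons sum_distrib_left)
qed

lemma prod_upt: "(\<Prod>x\<leftarrow>map f [0..<r]. g x) = (\<Prod>j<r. g (f j))"
  using prod.distinct_set_conv_list[of "[0..<r]" "\<lambda>j. g (f j)"] by (simp add: atLeast0LessThan o_def)

definition qL :: "'a::comm_ring_1 \<Rightarrow> nat \<Rightarrow> 'a list" where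
  "qL t r = map (\<lambda>j. t ^ j) [0..<r]"

definition G :: "'a::comm_ring_1 \<Rightarrow> nat \<Rightarrow> nat \<Rightarrow> 'a" where
  "G t r d = Hs d (qL t r)"

lemma qL_Suc: "qL t (Suc r) = 1 # map ((*) t) (qL t r)"
proof -
  have "[0..<Suc r] = 0 # map Suc [0..<r]" by (simp add: map_Suc_upt upt_conv_Cons)
  then show ?thesis unfolding qL_def by simp
qed

lemma G_Suc_r: "G t (Suc r) d = (\<Sum>b\<le>d. t ^ b * G t r b)"
proof -
  have "G t (Suc r) d = (\<Sum>a\<le>d. t ^ (d - a) * G t r (d - a))"
    unfolding G_def qL_Suc Hs_Cons Hs_scale by simp
  also have "\<dots> = (\<Sum>b\<le>d. t ^ b * G t r b)"
    by (rule sum.reindex_bij_witness[where i="\<lambda>i. d - i" and j="\<lambda>i. d - i"]) auto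
  finally show ?thesis .
qed

lemma G_step: "G t (Suc r) (Suc d) = G t (Suc r) d + t ^ Suc d * G t r (Suc d)"
  unfolding G_Suc_r by simp

lemma G_0r: "G t 0 d = (if d = 0 then 1 else 0)"
  unfolding G_def qL_def by (simp add: Hs_Nil)

lemma G_d0: "G t r 0 = 1"
  unfolding G_def by (simp add: Hs_0)

lemma G_I2_step:
  assumes IH: "(1 - t ^ (C + r)) * G t r C = (1 - t ^ r) * G t (Suc r) C"
    and J: "(1 - t ^ Suc C) * G t r (Suc C) = (1 - t ^ (C + r)) * G t r C"
  shows "(1 - t ^ (Suc C + r)) * G t r (Suc C) = (1 - t ^ r) * G t (Suc r) (Suc C)"
proof -
  have "(1 - t ^ r) * G t (Suc r) (Suc C) = (1 - t ^ r) * G t (Suc r) C + (1 - t ^ r) * t ^ Suc C * G t r (Suc C)"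
    unfolding G_step by (simp only: distrib_left mult.assoc)
  also have "\<dots> = (1 - t ^ (C + r)) * G t r C + (1 - t ^ r) * t ^ Suc C * G t r (Suc C)"
    by (simp only: IH)
  also have "\<dots> = (1 - t ^ Suc C) * G t r (Suc C) + (1 - t ^ r) * t ^ Suc C * G t r (Suc C)"
    by (simp only: J)
  also have "\<dots> = (1 - t ^ (Suc C + r)) * G t r (Suc C)"
    by (simp add: algebra_simps power_add)
  finally show ?thesis by simp
qed

lemma G_J: "(1 - t ^ Suc C) * G t r (Suc C) = (1 - t ^ (C + r)) * G t r C"
proof (induction r arbitrary: C)
  case 0
  then show ?case by (simp add: G_0r)
next
  case (Suc r)
  note IHJ = Suc.IH
  have I2: "(1 - t ^ (C + r)) * G t r C = (1 - t ^ r) * G t (Suc r) C" for C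
  proof (induction C)
    case 0
    then show ?case by (simp add: G_d0)
  next
    case (Suc C)
    then show ?case using G_I2_step[OF Suc.IH IHJ] by simp
  qed
  have "(1 - t ^ Suc C) * G t (Suc r) (Suc C) = (1 - t ^ Suc C) * G t (Suc r) C + t ^ Suc C * ((1 - t ^ Suc C) * G t r (Suc C))"
    unfolding G_step by (simp only: distrib_left mult.assoc mult.left_commute)
  also have "\<dots> = (1 - t ^ Suc C) * G t (Suc r) C + t ^ Suc C * ((1 - t ^ r) * G t (Suc r) C)"
    by (simp only: IHJ I2)
  also have "\<dots> = (1 - t ^ (C + Suc r)) * G t (Suc r) C"
    by (simp add: algebra_simps power_add)
  finally show ?case .
qed

lemma G_I2: "(1 - t ^ (C + r)) * G t r C = (1 - t ^ r) * G t (Suc r) C"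
proof (induction C)
  case 0
  then show ?case by (simp add: G_d0)
next
  case (Suc C)
  then show ?case using G_I2_step[OF Suc.IH G_J] by simp
qed

definition W :: "'a::comm_ring_1 \<Rightarrow> nat \<Rightarrow> 'a" where
  "W t r = (\<Prod>j\<in>{1..<r}. 1 - t ^ j)"

lemma P_eq: "r \<ge> 1 \<Longrightarrow> (\<Prod>j<r. 1 - t ^ (C + j)) = (1 - t ^ C) * G t r C * W t r"
proof (induction r rule: dec_induct)
  case base
  then show ?case by (simp add: W_def G_def qL_def Hs_Cons Hs_Nil)
next
  case (step r)
  have "(\<Prod>j<Suc r. 1 - t ^ (C + j)) = (1 - t ^ C) * W t r * ((1 - t ^ (C + r)) * G t r C)"
  proof -
    have "(\<Prod>j<Suc r. 1 - t ^ (C + j)) = (\<Prod>j<r. 1 - t ^ (C + j)) * (1 - t ^ (C + r))" by simp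
    also have "\<dots> = (1 - t ^ C) * G t r C * W t r * (1 - t ^ (C + r))" using step.IH by simp
    finally show ?thesis by (simp add: ac_simps)
  qed
  also have "\<dots> = (1 - t ^ C) * W t r * ((1 - t ^ r) * G t (Suc r) C)"
    by (simp only: G_I2)
  also have "\<dots> = (1 - t ^ C) * G t (Suc r) C * W t (Suc r)"
  proof -
    have "W t (Suc r) = W t r * (1 - t ^ r)" using step(1) by (simp add: W_def prod.atLeastLessThan_Suc)
    then show ?thesis by (simp add: ac_simps)
  qed
  finally show ?case .
qed

lemma pk_geom: "r \<ge> 1 \<Longrightarrow> pk K (map (\<lambda>j. t ^ (C + j)) [0..<r]) =
   W t r * ((1 - t ^ C) * G t r C * (\<Sum>d<K. t ^ (C * d) * G t r d))"
proof -
  assume r: "r \<ge> 1"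
  have L: "map (\<lambda>j. t ^ (C + j)) [0..<r] = map ((*) (t ^ C)) (qL t r)"
    unfolding qL_def by (simp add: power_add)
  have "pk K (map (\<lambda>j. t ^ (C + j)) [0..<r]) = (\<Prod>j<r. 1 - t ^ (C + j)) * (\<Sum>d<K. t ^ (C * d) * G t r d)"
  proof -
    have "(\<Prod>l\<leftarrow>map (\<lambda>j. t ^ (C + j)) [0..<r]. 1 - l) = (\<Prod>j<r. 1 - t ^ (C + j))"
      by (rule prod_upt)
    moreover have "Hs d (map (\<lambda>j. t ^ (C + j)) [0..<r]) = t ^ (C * d) * G t r d" for d
      unfolding L Hs_scale G_def by (simp add: power_mult)
    ultimately show ?thesis unfolding pk_Hs by simp
  qed
  then show ?thesis by (subst (asm) P_eq[OF r]) (simp add: ac_simps)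
qed

lemma Phi_double: "(1 - t ^ C) * G t r C * (\<Sum>d<K. t ^ (C * d) * G t r d) =
  (\<Sum>d<K. \<Sum>e<C. G t r d * G t r e * t ^ (e * d) * (t ^ d + t ^ e - 1 - t ^ (d + e + r)))"
proof -
  have "(1 - t ^ C) * G t r C * t ^ (C * d) = (\<Sum>e<C. G t r e * t ^ (e * d) * (t ^ d + t ^ e - 1 - t ^ (d + e + r)))" for d
  proof -
    define f where "f e = (1 - t ^ e) * G t r e * t ^ (e * d)" for e
    have "(\<Sum>e<C. f (Suc e) - f e) = f C - f 0" by (rule sum_lessThan_telescope)
    moreover have "f (Suc e) - f e = G t r e * t ^ (e * d) * (t ^ d + t ^ e - 1 - t ^ (d + e + r))" for e
    proof -
      have "f (Suc e) = (1 - t ^ Suc e) * G t r (Suc e) * t ^ (e * d) * t ^ d"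
        unfolding f_def by (simp add: power_add algebra_simps)
      also have "\<dots> = (1 - t ^ (e + r)) * G t r e * t ^ (e * d) * t ^ d"
        by (simp only: G_J)
      finally show ?thesis unfolding f_def by (simp add: algebra_simps power_add)
    qed
    ultimately show ?thesis by (simp add: f_def)
  qed
  note fd = this
  have "(1 - t ^ C) * G t r C * (\<Sum>d<K. t ^ (C * d) * G t r d) = (\<Sum>d<K. G t r d * ((1 - t ^ C) * G t r C * t ^ (C * d)))"
    by (simp add: sum_distrib_left ac_simps)
  also have "\<dots> = (\<Sum>d<K. G t r d * (\<Sum>e<C. G t r e * t ^ (e * d) * (t ^ d + t ^ e - 1 - t ^ (d + e + r))))"
    by (simp only: fd)
  also have "\<dots> = (\<Sum>d<K. \<Sum>e<C. G t r d * G t r e * t ^ (e * d) * (t ^ d + t ^ e - 1 - t ^ (d + e + r)))"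
    by (simp add: sum_distrib_left ac_simps)
  finally show ?thesis .
qed

lemma pk_geom_sym: "r \<ge> 1 \<Longrightarrow> pk K (map (\<lambda>j. t ^ (C + j)) [0..<r]) = pk C (map (\<lambda>j. t ^ (K + j)) [0..<r])"
  unfolding pk_geom Phi_double
  by (subst sum.swap) (simp add: ac_simps)


lemma mon_rev: "length \<alpha> = length xs \<Longrightarrow> mon (rev xs) (rev \<alpha>) = mon xs \<alpha>"
  unfolding mon_def
  by (rule prod.reindex_bij_witness[where i="\<lambda>j. length xs - Suc j" and j="\<lambda>j. length xs - Suc j"])
     (auto simp: rev_nth)

lemma mon_rev': "length \<alpha> = length xs \<Longrightarrow> mon xs (rev \<alpha>) = mon (rev xs) \<alpha>"
  using mon_rev[of "rev \<alpha>" xs] by simp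

lemma pk_rev: "pk k (rev xs) = pk k xs"
proof -
  let ?A = "{\<alpha>::nat list. length \<alpha> = length xs \<and> sum_list \<alpha> < k}"
  have "(\<Sum>\<alpha>\<in>?A. mon (rev xs) \<alpha>) = (\<Sum>\<alpha>\<in>?A. mon xs \<alpha>)"
    by (rule sum.reindex_bij_witness[where i=rev and j=rev]) (auto simp: mon_rev')
  moreover have "(\<Prod>l\<leftarrow>rev xs. 1 - l) = (\<Prod>l\<leftarrow>xs. 1 - l)"
    by (simp add: rev_map[symmetric] prod_list.rev)
  ultimately show ?thesis unfolding pk_def mon_def[symmetric] by simp
qed

lemma pk_zero: "j < r \<Longrightarrow> f j = 1 \<Longrightarrow> pk k (map f [0..<r]) = 0"
  unfolding pk_def prod_upt by (subst prod_zero) auto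

lemma cg_mult: "(D::'a::comm_ring_1) dvd a - b \<Longrightarrow> D dvd c - e \<Longrightarrow> D dvd a * c - b * e"
proof -
  assume "D dvd a - b" "D dvd c - e"
  then have "D dvd a * (c - e) + (a - b) * e" by (simp add: dvd_add dvd_mult dvd_mult2)
  then show ?thesis by (simp add: algebra_simps)
qed

lemma cg_diff: "(D::'a::comm_ring_1) dvd a - b \<Longrightarrow> D dvd c - e \<Longrightarrow> D dvd (a - c) - (b - e)"
proof -
  assume "D dvd a - b" "D dvd c - e"
  then have "D dvd (a - b) - (c - e)" by (simp add: dvd_diff)
  then show ?thesis by (simp add: algebra_simps)
qed

lemma cg_power: "(D::'a::comm_ring_1) dvd a - b \<Longrightarrow> D dvd a ^ n - b ^ n"
  by (induction n) (simp_all add: cg_mult)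

lemma cg_prod: "(\<And>j. j < (n::nat) \<Longrightarrow> (D::'a::comm_ring_1) dvd f j - g j) \<Longrightarrow> D dvd (\<Prod>j<n. f j) - (\<Prod>j<n. g j)"
  by (induction n) (simp_all add: cg_mult)

lemma cg_sum: "(\<And>x. x \<in> A \<Longrightarrow> (D::'a::comm_ring_1) dvd f x - g x) \<Longrightarrow> D dvd (\<Sum>x\<in>A. f x) - (\<Sum>x\<in>A. g x)"
  by (simp add: sum_subtractf[symmetric] dvd_sum)

lemma cg_pk: "(\<And>j. j < r \<Longrightarrow> (D::'a::comm_ring_1) dvd f j - g j) \<Longrightarrow>
   D dvd pk k (map f [0..<r]) - pk k (map g [0..<r])"
proof -
  assume h: "\<And>j. j < r \<Longrightarrow> D dvd f j - g j"
  have 1: "D dvd (\<Prod>j<r. 1 - f j) - (\<Prod>j<r. 1 - g j)"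
    by (rule cg_prod, rule cg_diff) (simp_all add: h)
  have 2: "D dvd (\<Sum>\<alpha>\<in>A. \<Prod>j<r. f j ^ (\<alpha> ! j)) - (\<Sum>\<alpha>\<in>A. \<Prod>j<r. g j ^ (\<alpha> ! j))" for A
    by (rule cg_sum, rule cg_prod, rule cg_power) (simp add: h)
  show ?thesis
    unfolding pk_def prod_upt by (simp add: cg_mult[OF 1 2])
qed

lemma lmono_mult: "lmono a b * lmono c d = lmono (a + c) (b + d)"
  unfolding lmono_def by (simp add: mult_single)

lemma lmono_00: "lmono 0 0 = 1"
  unfolding lmono_def by (simp add: zero_prod_def[symmetric])

lemma lmono_pos: "lmono 0 (int e) = lmono 0 1 ^ e"
proof (induction e)
  case 0 then show ?case by (simp add: lmono_00)
next
  case (Suc e)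
  have "lmono 0 (int (Suc e)) = lmono 0 1 * lmono 0 (int e)" by (simp add: lmono_mult)
  then show ?case using Suc by simp
qed

lemma lmono_neg: "lmono 0 (- int e) = lmono 0 (-1) ^ e"
proof (induction e)
  case 0 then show ?case by (simp add: lmono_00)
next
  case (Suc e)
  have "lmono 0 (- int (Suc e)) = lmono 0 (-1) * lmono 0 (- int e)" by (simp add: lmono_mult)
  then show ?case using Suc by simp
qed

lemma cg_mono_neg: "f' = f + s \<Longrightarrow> (1 - lmono 1 s) dvd lmono (-1) f - lmono 0 f'"
proof -
  assume "f' = f + s"
  then have "lmono (-1) f - lmono 0 f' = lmono (-1) f * (1 - lmono 1 s)"
    by (simp add: algebra_simps lmono_mult)
  then show ?thesis by simp
qed

lemma cg_mono_pos: "f' = f - s \<Longrightarrow> (1 - lmono 1 s) dvd lmono 1 f - lmono 0 f'"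
proof -
  assume "f' = f - s"
  then have "lmono 1 f - lmono 0 f' = - lmono 0 f' * (1 - lmono 1 s)"
    by (simp add: algebra_simps lmono_mult)
  then show ?thesis by (metis dvd_triv_right)
qed


definition Spec :: "int \<Rightarrow> int \<Rightarrow> int \<Rightarrow> int \<Rightarrow> laurent2" where
  "Spec k l m n = (if m > k then pk (nat (m - k)) (map (\<lambda>j. lmono 0 (n - k + int j)) [0..<nat (k + l + 1)])
     else if - l \<le> m then 0
     else pk (nat (- m - l)) (map (\<lambda>j. lmono 0 (- n - l + int j)) [0..<nat (k + l + 1)]))"

lemma xgen_cg: "(1 - lmono 1 (m + n)) dvd xgen i m - Spec (k_of i) (ell_of i) m n"
proof -
  let ?k = "k_of i" and ?l = "ell_of i"
  consider "m > ?k" | "\<not> m > ?k" "- ?l \<le> m" | "\<not> m > ?k" "\<not> - ?l \<le> m" by blast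
  then show ?thesis
  proof cases
    case 1
    then show ?thesis unfolding xgen_def Let_def Spec_def
      by (simp, intro cg_pk cg_mono_neg) simp
  next
    case 2
    then show ?thesis unfolding xgen_def Let_def Spec_def by simp
  next
    case 3
    then show ?thesis unfolding xgen_def Let_def Spec_def
      by (simp, intro cg_pk cg_mono_pos) simp
  qed
qed

lemma lp: "0 \<le> c \<Longrightarrow> map (\<lambda>j. lmono 0 (c + int j)) [0..<r] = map (\<lambda>j. lmono 0 1 ^ (nat c + j)) [0..<r]"
  by (auto intro!: map_cong simp: lmono_pos[symmetric])

lemma ln: "c = - int N - int r + 1 \<Longrightarrow>
  map (\<lambda>j. lmono 0 (c + int j)) [0..<r] = rev (map (\<lambda>j. lmono 0 (-1) ^ (N + j)) [0..<r])"
proof (rule nth_equalityI)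
  assume c: "c = - int N - int r + 1"
  show "length (map (\<lambda>j. lmono 0 (c + int j)) [0..<r]) = length (rev (map (\<lambda>j. lmono 0 (-1) ^ (N + j)) [0..<r]))"
    by simp
  fix j assume "j < length (map (\<lambda>j. lmono 0 (c + int j)) [0..<r])"
  then have j: "j < r" by simp
  have eq: "c + int j = - int (N + (r - Suc j))" using c j by simp
  have "lmono 0 (c + int j) = lmono 0 (-1) ^ (N + (r - Suc j))" unfolding eq by (rule lmono_neg)
  then show "map (\<lambda>j. lmono 0 (c + int j)) [0..<r] ! j = rev (map (\<lambda>j. lmono 0 (-1) ^ (N + j)) [0..<r]) ! j"
    using j by (simp add: rev_nth)
qed

lemma Spec_sym:
  assumes k: "0 \<le> k" and l: "0 \<le> l"
  shows "Spec k l m n = Spec k l n m"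
proof -
  let ?r = "nat (k + l + 1)"
  have r: "?r \<ge> 1" using k l by simp
  have L1: "Spec k l m n = Spec k l n m" if "m > k" "n > k" for m n
  proof -
    have "Spec k l m n = pk (nat (m - k)) (map (\<lambda>j. lmono 0 1 ^ (nat (n - k) + j)) [0..<?r])"
      using that unfolding Spec_def by (simp add: lp)
    also have "\<dots> = pk (nat (n - k)) (map (\<lambda>j. lmono 0 1 ^ (nat (m - k) + j)) [0..<?r])"
      by (rule pk_geom_sym[OF r])
    also have "\<dots> = Spec k l n m"
      using that unfolding Spec_def by (simp add: lp)
    finally show ?thesis .
  qed
  have L5: "Spec k l m n = Spec k l n m" if "m < - l" "n < - l" for m n
  proof -
    have "Spec k l m n = pk (nat (- m - l)) (map (\<lambda>j. lmono 0 1 ^ (nat (- n - l) + j)) [0..<?r])"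
      using that k l unfolding Spec_def by (simp add: lp)
    also have "\<dots> = pk (nat (- n - l)) (map (\<lambda>j. lmono 0 1 ^ (nat (- m - l) + j)) [0..<?r])"
      by (rule pk_geom_sym[OF r])
    also have "\<dots> = Spec k l n m"
      using that k l unfolding Spec_def by (simp add: lp)
    finally show ?thesis .
  qed
  have L3: "Spec k l m n = Spec k l n m" if "m > k" "n < - l" for m n
  proof -
    have e1: "n - k = - int (nat (- n - l)) - int ?r + 1" using that k l by simp
    have e2: "- m - l = - int (nat (m - k)) - int ?r + 1" using that k l by simp
    have "Spec k l m n = pk (nat (m - k)) (map (\<lambda>j. lmono 0 (-1) ^ (nat (- n - l) + j)) [0..<?r])"
      using that unfolding Spec_def by (simp add: ln[OF e1] pk_rev)
    also have "\<dots> = pk (nat (- n - l)) (map (\<lambda>j. lmono 0 (-1) ^ (nat (m - k) + j)) [0..<?r])"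
      by (rule pk_geom_sym[OF r])
    also have "\<dots> = Spec k l n m"
      using that k l unfolding Spec_def by (simp add: ln[OF e2] pk_rev)
    finally show ?thesis .
  qed
  have L2: "Spec k l m n = 0" "Spec k l n m = 0" if "m > k" "- l \<le> n" "n \<le> k" for m n
  proof -
    show "Spec k l m n = 0"
      using that unfolding Spec_def
      by (simp, intro pk_zero[where j="nat (k - n)"]) (simp_all add: lmono_00)
    show "Spec k l n m = 0"
      using that unfolding Spec_def by simp
  qed
  have L4: "Spec k l m n = 0" "Spec k l n m = 0" if "- l \<le> m" "m \<le> k" "n < - l" for m n
  proof -
    show "Spec k l m n = 0"
      using that unfolding Spec_def by simp
    show "Spec k l n m = 0"
      using that k unfolding Spec_def
      by (simp, intro pk_zero[where j="nat (m + l)"]) (simp_all add: lmono_00)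
  qed
  consider "m > k" | "- l \<le> m" "m \<le> k" | "m < - l" by linarith
  then show ?thesis
  proof cases
    case 1
    consider "n > k" | "- l \<le> n" "n \<le> k" | "n < - l" by linarith
    then show ?thesis using 1 L1 L2 L3 by cases auto
  next
    case 2
    consider "n > k" | "- l \<le> n" "n \<le> k" | "n < - l" by linarith
    then show ?thesis
    proof cases
      case 1 then show ?thesis using 2 L2[of n m] by simp
    next
      case 2 then show ?thesis using \<open>- l \<le> m\<close> \<open>m \<le> k\<close> unfolding Spec_def by simp
    next
      case 3 then show ?thesis using 2 L4[of m n] by simp
    qed
  next
    case 3
    consider "n > k" | "- l \<le> n" "n \<le> k" | "n < - l" by linarith
    then show ?thesis using 3 L3[of n m] L4[of n m] L5 by cases auto
  qed
qed

theorem mainTheorem9: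
  fixes i m n :: int
  assumes "i \<noteq> 0" and "m \<noteq> n"
  shows "(1 - lmono 1 (m + n)) dvd (xgen i m - xgen i n)"
proof -
  have k: "0 \<le> k_of i" unfolding k_of_def by simp
  have l: "0 \<le> ell_of i" unfolding ell_of_def using assms(1) by simp
  have h1: "(1 - lmono 1 (m + n)) dvd xgen i m - Spec (k_of i) (ell_of i) m n" by (rule xgen_cg)
  have h2: "(1 - lmono 1 (m + n)) dvd xgen i n - Spec (k_of i) (ell_of i) m n"
    using xgen_cg[of n m i] Spec_sym[OF k l, of n m] by (simp add: add.commute)
  have "(1 - lmono 1 (m + n)) dvd (xgen i m - Spec (k_of i) (ell_of i) m n) - (xgen i n - Spec (k_of i) (ell_of i) m n)"
    using h1 h2 by (rule dvd_diff)
  then show ?thesis by simp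
qed

end
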